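(* Let $v_1,\dots,v_n$ be non-zero vectors in $\mathbb{C}^n$ and let $\mathcal{A}\subseteq M_n(\mathbb{C})$ be the algebra generated by $$A_1=\sum_{j=1}^n v_1(j)E_{1,j},\ \dots,\ A_n=\sum_{j=1}^n v_n(j)E_{n,j}.$$ Then there exist $k\in\{1,\dots,n\}$, a non-zero vector $v\in\mathbb{C}^k$ and a unitary $U\in M_n(\mathbb{C})$ such that $$\sum_{j=1}^k v(j)E_{1,j},\ \dots,\ \sum_{j=1}^k v(j)E_{k,j}\in U\mathcal{A}U^*.$$
   Context: $E_{i,j}$ denote the matrix units of $M_n(\mathbb{C})$; $v(j)$ denotes the $j$-th coordinate of a vector $v$. *)

theory Defs
  imports "Jordan_Normal_Form.Schur_Decomposition"
begin

(* Matrix unit E_{i,j} of M_n(C) (0-based indices i,j < n). *)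
definition mat_unit :: "nat \<Rightarrow> nat \<Rightarrow> nat \<Rightarrow> complex mat" where
  "mat_unit n i j = mat n n (\<lambda>(a,b). if a = i \<and> b = j then 1 else 0)"

definition row_embed :: "nat \<Rightarrow> nat \<Rightarrow> complex vec \<Rightarrow> complex mat" where
  "row_embed n i v = foldr (\<lambda>j M. (v $ j) \<cdot>\<^sub>m mat_unit n i j + M) [0..<dim_vec v] (0\<^sub>m n n)"

(* The (not necessarily unital) subalgebra of M_n(C) generated by a set S of n x n matrices *)
inductive_set gen_alg :: "nat \<Rightarrow> complex mat set \<Rightarrow> complex mat set" for n S where
  gen: "A \<in> S \<Longrightarrow> A \<in> carrier_mat n n \<Longrightarrow> A \<in> gen_alg n S"
| zero: "0\<^sub>m n n \<in> gen_alg n S"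
| add: "A \<in> gen_alg n S \<Longrightarrow> B \<in> gen_alg n S \<Longrightarrow> A + B \<in> gen_alg n S"
| smult: "A \<in> gen_alg n S \<Longrightarrow> c \<cdot>\<^sub>m A \<in> gen_alg n S"
| mult: "A \<in> gen_alg n S \<Longrightarrow> B \<in> gen_alg n S \<Longrightarrow> A * B \<in> gen_alg n S"

definition unitary_mat :: "nat \<Rightarrow> complex mat \<Rightarrow> bool" where
  "unitary_mat n U \<longleftrightarrow> U \<in> carrier_mat n n \<and> U * mat_adjoint U = 1\<^sub>m n \<and> mat_adjoint U * U = 1\<^sub>m n"

end

theory Submission imports Defs begin

lemma adj_eq: assumes "U \<in> carrier_mat n n"
  shows "mat_adjoint U = mat n n (\<lambda>(a,b). conjugate (U $$ (b,a)))"
  using assms unfolding mat_adjoint_def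
  by (intro eq_matI) (auto simp: mat_of_rows_def cols_def)

definition rowmat :: "nat \<Rightarrow> nat \<Rightarrow> complex vec \<Rightarrow> complex mat" where
  "rowmat n i w = mat n n (\<lambda>(a,b). if a = i then w $ b else 0)"

lemma foldr_row: assumes "m \<le> dim_vec v" "m \<le> n"
  shows "foldr (\<lambda>j M. (v $ j) \<cdot>\<^sub>m mat_unit n i j + M) [a..<m] (0\<^sub>m n n)
     = mat n n (\<lambda>(x,y). if x = i \<and> a \<le> y \<and> y < m then v $ y else 0)"
  using assms
proof (induction "m - a" arbitrary: a)
  case 0
  then show ?case by (intro eq_matI) auto
next
  case (Suc d)
  then have am: "a < m" by auto
  have IH: "foldr (\<lambda>j M. (v $ j) \<cdot>\<^sub>m mat_unit n i j + M) [Suc a..<m] (0\<^sub>m n n)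
     = mat n n (\<lambda>(x,y). if x = i \<and> Suc a \<le> y \<and> y < m then v $ y else 0)"
    using Suc by auto
  show ?case using am IH Suc(3,4)
    by (subst upt_conv_Cons[OF am]) (auto intro!: eq_matI simp: mat_unit_def)
qed

lemma row_embed_eq: assumes "dim_vec v \<le> n"
  shows "row_embed n i v = mat n n (\<lambda>(x,y). if x = i \<and> y < dim_vec v then v $ y else 0)"
  unfolding row_embed_def using foldr_row[OF order.refl assms, of i 0] by simp

lemma row_embed_carrier: assumes "w \<in> carrier_vec n" shows "row_embed n i w \<in> carrier_mat n n"
  using assms by (auto simp: row_embed_eq)

lemma row_embed_rowmat: assumes "w \<in> carrier_vec n" shows "row_embed n i w = rowmat n i w"
  using assms by (auto simp: row_embed_eq rowmat_def intro!: eq_matI)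

lemma rowmat_mult: assumes "x \<in> carrier_vec n" "y \<in> carrier_vec n" "j < n"
  shows "rowmat n i x * rowmat n j y = (x $ j) \<cdot>\<^sub>m rowmat n i y"
proof (intro eq_matI)
  fix a b assume ab: "a < dim_row ((x $ j) \<cdot>\<^sub>m rowmat n i y)" "b < dim_col ((x $ j) \<cdot>\<^sub>m rowmat n i y)"
  then have "a < n" "b < n" by (auto simp: rowmat_def)
  then show "(rowmat n i x * rowmat n j y) $$ (a, b) = ((x $ j) \<cdot>\<^sub>m rowmat n i y) $$ (a, b)"
    using assms by (auto simp: rowmat_def scalar_prod_def row_def col_def if_distrib sum.delta cong: if_cong)
qed (auto simp: rowmat_def)

lemma path_alg:
  fixes vs :: "nat \<Rightarrow> complex vec"
  assumes vs: "\<And>i. i < n \<Longrightarrow> vs i \<in> carrier_vec n"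
  and E: "E = {(a,b). a < n \<and> b < n \<and> vs a $ b \<noteq> 0}"
  and p: "(i,j) \<in> E\<^sup>*" and i: "i < n" and j: "j < n"
  shows "rowmat n i (vs j) \<in> gen_alg n {row_embed n i (vs i) | i. i < n}"
  using p i
proof (induction rule: converse_rtrancl_induct)
  case base
  have "row_embed n j (vs j) \<in> gen_alg n {row_embed n i (vs i) | i. i < n}"
    by (rule gen_alg.gen) (use j vs row_embed_carrier in auto)
  then show ?case using row_embed_rowmat[OF vs[OF j]] by simp
next
  case (step y z)
  then have yz: "y < n" "z < n" "vs y $ z \<noteq> 0" using E by auto
  have "row_embed n y (vs y) \<in> gen_alg n {row_embed n i (vs i) | i. i < n}"
    by (rule gen_alg.gen) (use yz vs row_embed_carrier in auto)
  then have "rowmat n y (vs y) * rowmat n z (vs j) \<in> gen_alg n {row_embed n i (vs i) | i. i < n}"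
    using step yz row_embed_rowmat[OF vs[OF yz(1)]] by (auto intro: gen_alg.mult)
  then have "(1 / vs y $ z) \<cdot>\<^sub>m (rowmat n y (vs y) * rowmat n z (vs j)) \<in> gen_alg n {row_embed n i (vs i) | i. i < n}"
    by (rule gen_alg.smult)
  also have "(1 / vs y $ z) \<cdot>\<^sub>m (rowmat n y (vs y) * rowmat n z (vs j)) = rowmat n y (vs j)"
    using yz by (simp add: rowmat_mult vs j) (auto intro!: eq_matI simp: rowmat_def)
  finally show ?case .
qed

lemma ifmult: "(if P then 1 else 0) * (x::complex) = (if P then x else 0)"
  "(x::complex) * (if P then 1 else 0) = (if P then x else 0)" by auto

lemma perm_unitary:
  assumes inj: "inj_on \<tau> {0..<n}" and im: "\<tau> ` {0..<n} = {0..<n}"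
  and U: "U = mat n n (\<lambda>(a,b). if b = \<tau> a then 1 else 0 :: complex)"
  shows "unitary_mat n U"
    and "\<And>M. M \<in> carrier_mat n n \<Longrightarrow> U * M * mat_adjoint U = mat n n (\<lambda>(a,b). M $$ (\<tau> a, \<tau> b))"
proof -
  have Uc: "U \<in> carrier_mat n n" using U by simp
  have adj: "mat_adjoint U = mat n n (\<lambda>(a,b). if a = \<tau> b then 1 else 0)"
    using adj_eq[OF Uc] U by (auto intro!: eq_matI)
  have tl: "\<tau> a < n" if "a < n" for a using im that by auto
  have "U * mat_adjoint U = 1\<^sub>m n"
  proof (intro eq_matI)
    fix a b assume "a < dim_row (1\<^sub>m n :: complex mat)" "b < dim_col (1\<^sub>m n :: complex mat)"
    then have ab: "a < n" "b < n" by auto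
    have "(U * mat_adjoint U) $$ (a,b) = (\<Sum>c\<in>{0..<n}. (if c = \<tau> a then 1 else 0) * (if c = \<tau> b then 1 else 0))"
      using ab unfolding adj by (simp add: U scalar_prod_def row_def col_def)
    also have "\<dots> = (if \<tau> a = \<tau> b then 1 else 0)"
      using tl[OF ab(1)] tl[OF ab(2)] by (simp add: if_distrib sum.delta cong: if_cong)
    also have "\<dots> = 1\<^sub>m n $$ (a,b)" using ab inj by (auto dest: inj_onD)
    finally show "(U * mat_adjoint U) $$ (a,b) = 1\<^sub>m n $$ (a,b)" .
  qed (simp_all add: adj, simp_all add: U)
  moreover have "mat_adjoint U * U = 1\<^sub>m n"
  proof (intro eq_matI)
    fix a b assume "a < dim_row (1\<^sub>m n :: complex mat)" "b < dim_col (1\<^sub>m n :: complex mat)"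
    then have ab: "a < n" "b < n" by auto
    obtain c where c: "c < n" "a = \<tau> c" using ab im by (metis atLeastLessThan_iff imageE zero_le)
    have "(mat_adjoint U * U) $$ (a,b) = (\<Sum>d\<in>{0..<n}. (if a = \<tau> d then 1 else 0) * (if b = \<tau> d then 1 else 0))"
      using ab unfolding adj by (simp add: U scalar_prod_def row_def col_def)
    also have "\<dots> = (\<Sum>d\<in>{0..<n}. if d = c then (if b = a then 1 else 0) else 0)"
      using c inj by (intro sum.cong) (auto dest: inj_onD)
    also have "\<dots> = 1\<^sub>m n $$ (a,b)" using ab c by auto
    finally show "(mat_adjoint U * U) $$ (a,b) = 1\<^sub>m n $$ (a,b)" .
  qed (simp_all add: adj, simp_all add: U)
  ultimately show "unitary_mat n U" using Uc unfolding unitary_mat_def by auto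
  fix M :: "complex mat" assume M: "M \<in> carrier_mat n n"
  show "U * M * mat_adjoint U = mat n n (\<lambda>(a,b). M $$ (\<tau> a, \<tau> b))"
  proof (intro eq_matI)
    fix a b assume "a < dim_row (mat n n (\<lambda>(a,b). M $$ (\<tau> a, \<tau> b)))" "b < dim_col (mat n n (\<lambda>(a,b). M $$ (\<tau> a, \<tau> b)))"
    then have ab: "a < n" "b < n" by auto
    have UM: "U * M = mat n n (\<lambda>(a,b). M $$ (\<tau> a, b))"
    proof (intro eq_matI)
      fix x y assume "x < dim_row (mat n n (\<lambda>(a,b). M $$ (\<tau> a, b)))" "y < dim_col (mat n n (\<lambda>(a,b). M $$ (\<tau> a, b)))"
      then have xy: "x < n" "y < n" by auto
      show "(U * M) $$ (x,y) = mat n n (\<lambda>(a,b). M $$ (\<tau> a, b)) $$ (x,y)"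
        using xy M tl[OF xy(1)] by (simp add: U scalar_prod_def row_def col_def ifmult sum.delta cong: if_cong)
    qed (use M U in auto)
    show "(U * M * mat_adjoint U) $$ (a,b) = mat n n (\<lambda>(a,b). M $$ (\<tau> a, \<tau> b)) $$ (a,b)"
      using ab tl[OF ab(2)] unfolding UM adj by (simp add: scalar_prod_def row_def col_def if_distrib sum.delta cong: if_cong)
  qed (simp_all add: adj, use M U in auto)
qed

theorem lemma4:
  fixes n :: nat and vs :: "nat \<Rightarrow> complex vec"
  assumes "n \<ge> 1"
    and "\<And>i. i < n \<Longrightarrow> vs i \<in> carrier_vec n \<and> vs i \<noteq> 0\<^sub>v n"
  shows "\<exists>k v U. 1 \<le> k \<and> k \<le> n \<and> v \<in> carrier_vec k \<and> v \<noteq> 0\<^sub>v k \<and> unitary_mat n U \<and>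
           (\<forall>i<k. row_embed n i v \<in>
              {U * A * mat_adjoint U | A. A \<in> gen_alg n {row_embed n i (vs i) | i. i < n}})"
proof -
  define E where "E = {(a,b). a < n \<and> b < n \<and> vs a $ b \<noteq> 0}"
  define R where "R j = {t. (j,t) \<in> E\<^sup>*}" for j
  have vsc: "\<And>i. i < n \<Longrightarrow> vs i \<in> carrier_vec n" using assms(2) by auto
  have Rsub: "R j \<subseteq> {0..<n}" if "j < n" for j
  proof
    fix t assume "t \<in> R j"
    then have "(j,t) \<in> E\<^sup>*" by (simp add: R_def)
    then show "t \<in> {0..<n}" by (induction rule: rtrancl_induct) (use that E_def in auto)
  qed
  have Rfin: "finite (R j)" if "j < n" for j using Rsub[OF that] finite_subset by blast
  obtain j where j: "j < n" and jmin: "\<And>j'. j' < n \<Longrightarrow> card (R j) \<le> card (R j')"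
    using ex_has_least_nat[of "\<lambda>j. j < n" 0 "\<lambda>j. card (R j)"] assms(1) by auto
  define I where "I = R j"
  define w where "w = vs j"
  have wc: "w \<in> carrier_vec n" using vsc[OF j] w_def by simp
  have jI: "j \<in> I" by (simp add: I_def R_def)
  have Isub: "I \<subseteq> {0..<n}" using Rsub[OF j] I_def by simp
  have backp: "(i,j) \<in> E\<^sup>*" if "i \<in> I" for i
  proof -
    have i: "i < n" using that Isub by auto
    have "R i \<subseteq> R j" using that unfolding I_def R_def by (auto intro: rtrancl_trans)
    moreover have "card (R j) \<le> card (R i)" using jmin[OF i] .
    ultimately have "R i = R j" using Rfin[OF j] by (metis card_seteq)
    then show ?thesis using jI unfolding I_def R_def by auto
  qed
  have inalg: "rowmat n i w \<in> gen_alg n {row_embed n i (vs i) | i. i < n}" if "i \<in> I" for i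
    using path_alg[OF vsc E_def backp[OF that]] that Isub j w_def by auto
  have supp: "w $ b = 0" if "b < n" "b \<notin> I" for b
  proof (rule ccontr)
    assume "w $ b \<noteq> 0"
    then have "(j,b) \<in> E" using that j w_def E_def by auto
    then have "b \<in> I" unfolding I_def R_def by auto
    then show False using that by simp
  qed
  define k where "k = card I"
  have kpos: "1 \<le> k" using jI Isub k_def finite_subset[OF Isub] by (metis One_nat_def Suc_leI card_gt_0_iff empty_iff finite_atLeastLessThan)
  have kn: "k \<le> n" using k_def card_mono[OF _ Isub] by simp
  define L where "L = sorted_list_of_set I @ sorted_list_of_set ({0..<n} - I)"
  have finI: "finite I" using finite_subset[OF Isub] by simp
  have Ldist: "distinct L" unfolding L_def using finI by (simp add: disjoint_iff)
  have "set L = I \<union> ({0..<n} - I)" unfolding L_def using finI by simp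
  then have Lset: "set L = {0..<n}" using Isub by auto
  have Llen: "length L = n" using distinct_card[OF Ldist] Lset by simp
  define \<tau> where "\<tau> s = L ! s" for s
  have inj: "inj_on \<tau> {0..<n}" unfolding \<tau>_def inj_on_def using Ldist Llen by (simp add: nth_eq_iff_index_eq)
  have "\<tau> ` {0..<n} = set L" unfolding \<tau>_def set_conv_nth Llen[symmetric] by auto
  then have im: "\<tau> ` {0..<n} = {0..<n}" using Lset by simp
  have tauI: "\<tau> s \<in> I" if "s < k" for s
    using that finI unfolding \<tau>_def L_def k_def
    by (simp add: nth_append) (metis nth_mem length_sorted_list_of_set set_sorted_list_of_set)
  have tauNI: "\<tau> s \<notin> I" if "k \<le> s" "s < n" for s
  proof -
    have "\<tau> s = sorted_list_of_set ({0..<n} - I) ! (s - k)"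
      using that finI unfolding \<tau>_def L_def k_def by (simp add: nth_append)
    moreover have "s - k < length (sorted_list_of_set ({0..<n} - I))"
      using that Llen unfolding L_def k_def using finI by simp
    ultimately have "\<tau> s \<in> {0..<n} - I" by (metis nth_mem set_sorted_list_of_set finite_Diff finite_atLeastLessThan)
    then show ?thesis by simp
  qed
  have tl: "\<tau> s < n" if "s < n" for s using im that by auto
  define U where "U = mat n n (\<lambda>(a,b). if b = \<tau> a then 1 else 0 :: complex)"
  note pu = perm_unitary[OF inj im U_def]
  define v where "v = vec k (\<lambda>t. w $ \<tau> t)"
  have vc: "v \<in> carrier_vec k" by (simp add: v_def)
  have vnz: "v \<noteq> 0\<^sub>v k"
  proof
    assume v0: "v = 0\<^sub>v k"
    have "w = 0\<^sub>v n"
    proof (intro eq_vecI)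
      fix b assume "b < dim_vec (0\<^sub>v n :: complex vec)"
      then have b: "b < n" by simp
      show "w $ b = 0\<^sub>v n $ b"
      proof (cases "b \<in> I")
        case True
        obtain s where s: "s < n" "b = \<tau> s" using im b by (metis atLeastLessThan_iff imageE zero_le)
        have "s < k" using tauNI s True by (meson not_le)
        then have "v $ s = w $ b" using s by (simp add: v_def)
        then show ?thesis using v0 \<open>s < k\<close> b by simp
      qed (use supp b in auto)
    qed (use wc in auto)
    then show False using assms(2)[OF j] w_def by simp
  qed
  show ?thesis
  proof (intro exI conjI allI impI)
    show "1 \<le> k" "k \<le> n" "v \<in> carrier_vec k" "v \<noteq> 0\<^sub>v k" "unitary_mat n U"
      using kpos kn vc vnz pu(1) by auto
    fix s assume s: "s < k"
    have eq: "row_embed n s v = U * rowmat n (\<tau> s) w * mat_adjoint U"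
    proof -
      have "U * rowmat n (\<tau> s) w * mat_adjoint U = mat n n (\<lambda>(a,b). rowmat n (\<tau> s) w $$ (\<tau> a, \<tau> b))"
        by (rule pu(2)) (simp add: rowmat_def)
      also have "\<dots> = row_embed n s v"
      proof (intro eq_matI)
        fix a b assume "a < dim_row (row_embed n s v)" "b < dim_col (row_embed n s v)"
        then have ab: "a < n" "b < n" using kn vc by (auto simp: row_embed_eq)
        have ta: "(\<tau> a = \<tau> s) = (a = s)" using inj ab s kn by (auto dest: inj_onD)
        show "mat n n (\<lambda>(a,b). rowmat n (\<tau> s) w $$ (\<tau> a, \<tau> b)) $$ (a,b) = row_embed n s v $$ (a,b)"
          using ab kn vc tl[OF ab(1)] tl[OF ab(2)] ta supp[OF tl[OF ab(2)]] tauNI[of b]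
          by (auto simp: row_embed_eq rowmat_def v_def)
      qed (use kn vc in \<open>auto simp: row_embed_eq\<close>)
      finally show ?thesis by simp
    qed
    show "row_embed n s v \<in> {U * A * mat_adjoint U | A. A \<in> gen_alg n {row_embed n i (vs i) | i. i < n}}"
      using eq inalg[OF tauI[OF s]] by blast
  qed
qed

end
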